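(* Consider $N$ users indexed by $\mathcal{U}=\{1,\dots,N\}$ with fixed channel power gains $h_1,\dots,h_N>0$ and noise variance $\eta>0$. For each $i\in\mathcal{U}$ let the strategy set be $\mathcal{P}^i=[0,P_i^{max}]$ with $P_i^{max}>0$, and for $\mathbf{P}=(P_1,\dots,P_N)\in\prod_{i}\mathcal{P}^i$ let $$r_i(\mathbf{P})=\log_2\!\Big(1+\frac{h_iP_i}{\eta+\sum_{j\neq i}h_jP_j}\Big).$$ Given targets $\theta_1,\dots,\theta_N$, a profile $\mathbf{P}^+\in\prod_i\mathcal{P}^i$ is a satisfaction equilibrium (SE) if $r_i(\mathbf{P}^+)\ge\theta_i$ for every $i\in\mathcal{U}$. Then the set of satisfaction equilibria is convex, closed and bounded (as a subset of $\mathbb{R}^N$).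
   Context: This is the game $\mathcal{G}=\{\mathcal{U},\{\mathcal{P}^i\},\{r_i\},\{\theta_i\}\}$: $r_i$ is the bandwidth-normalized throughput of user $i$ (a base-2 logarithm of one plus its signal-to-interference-and-noise ratio), $\theta_i$ is user $i$'s target throughput. *)

theory Defs
  imports "HOL-Analysis.Analysis"
begin

text \<open>Users are the elements of a finite type 'n (so N = CARD('n)); power profiles,
channel gains, maximal powers and targets are vectors in real^'n.\<close>

definition rate :: "real^'n::finite \<Rightarrow> real \<Rightarrow> real^'n \<Rightarrow> 'n \<Rightarrow> real" where
  "rate h \<eta> P i = log 2 (1 + h$i * P$i / (\<eta> + (\<Sum>j\<in>UNIV - {i}. h$j * P$j)))"

definition strategy_space :: "real^'n::finite \<Rightarrow> (real^'n) set" where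
  "strategy_space Pmax = {P. \<forall>i. 0 \<le> P$i \<and> P$i \<le> Pmax$i}"

definition SE_set :: "real^'n::finite \<Rightarrow> real \<Rightarrow> real^'n \<Rightarrow> real^'n \<Rightarrow> (real^'n) set" where
  "SE_set h \<eta> Pmax \<theta> = {P \<in> strategy_space Pmax. \<forall>i. rate h \<eta> P i \<ge> \<theta>$i}"

end

theory Submission
  imports Defs
begin

definition gg :: "real^'n::finite \<Rightarrow> real \<Rightarrow> real^'n \<Rightarrow> real^'n \<Rightarrow> 'n \<Rightarrow> real" where
  "gg h \<eta> \<theta> P i = h$i * P$i - (2 powr (\<theta>$i) - 1) * (\<eta> + (\<Sum>j\<in>UNIV - {i}. h$j * P$j))"

lemma SE_eq:
  fixes h Pmax \<theta> :: "real^'n::finite" and \<eta> :: real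
  assumes h: "\<And>i. h$i > 0" and e: "\<eta> > 0"
  shows "SE_set h \<eta> Pmax \<theta> = {P. \<forall>i. 0 \<le> P$i \<and> P$i \<le> Pmax$i \<and> gg h \<eta> \<theta> P i \<ge> 0}"
proof -
  have key: "rate h \<eta> P i \<ge> \<theta>$i \<longleftrightarrow> gg h \<eta> \<theta> P i \<ge> 0"
    if P: "\<forall>i. 0 \<le> P$i \<and> P$i \<le> Pmax$i" for P i
  proof -
    define D where "D = \<eta> + (\<Sum>j\<in>UNIV - {i}. h$j * P$j)"
    have "(\<Sum>j\<in>UNIV - {i}. h$j * P$j) \<ge> 0"
      by (rule sum_nonneg) (use h P in \<open>auto intro: mult_nonneg_nonneg less_imp_le\<close>)
    hence D: "D > 0" using e D_def by linarith
    have x: "h$i * P$i \<ge> 0" using h P by (simp add: less_imp_le)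
    have pos: "1 + h$i * P$i / D > 0" using D x by (smt (verit) divide_nonneg_pos)
    have "rate h \<eta> P i \<ge> \<theta>$i \<longleftrightarrow> 2 powr (\<theta>$i) \<le> 1 + h$i * P$i / D"
      unfolding rate_def D_def[symmetric] using le_log_iff[of 2 _ "\<theta>$i"] pos by simp
    also have "\<dots> \<longleftrightarrow> (2 powr (\<theta>$i) - 1) * D \<le> h$i * P$i"
      using D by (simp add: field_simps)
    finally show ?thesis unfolding gg_def D_def by simp
  qed
  show ?thesis unfolding SE_set_def strategy_space_def using key by blast
qed

theorem proposition1:
  fixes h Pmax \<theta> :: "real^'n::finite" and \<eta> :: real
  assumes "\<And>i. h$i > 0" and "\<eta> > 0" and "\<And>i. Pmax$i > 0"
  shows "convex (SE_set h \<eta> Pmax \<theta>) \<and> closed (SE_set h \<eta> Pmax \<theta>) \<and> bounded (SE_set h \<eta> Pmax \<theta>)"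
proof -
  note eq = SE_eq[OF assms(1,2), of Pmax \<theta>]
  have lin: "gg h \<eta> \<theta> (u *\<^sub>R x + v *\<^sub>R y) i = u * gg h \<eta> \<theta> x i + v * gg h \<eta> \<theta> y i"
    if "u + v = 1" for u v x y i
  proof -
    have s: "(\<Sum>j\<in>UNIV - {i}. h$j * (u *\<^sub>R x + v *\<^sub>R y)$j)
      = u * (\<Sum>j\<in>UNIV - {i}. h$j * x$j) + v * (\<Sum>j\<in>UNIV - {i}. h$j * y$j)"
      by (simp add: sum_distrib_left sum.distrib algebra_simps)
    have v: "v = 1 - u" using that by simp
    show ?thesis by (simp only: gg_def s) (simp add: v algebra_simps)
  qed
  have cv: "convex (SE_set h \<eta> Pmax \<theta>)"
    unfolding eq convex_def
  proof (intro allI impI ballI, clarify)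
    fix x y :: "real^'n" and u v :: real and i
    assume x: "\<forall>i. 0 \<le> x$i \<and> x$i \<le> Pmax$i \<and> 0 \<le> gg h \<eta> \<theta> x i"
      and y: "\<forall>i. 0 \<le> y$i \<and> y$i \<le> Pmax$i \<and> 0 \<le> gg h \<eta> \<theta> y i"
      and u: "0 \<le> u" and v: "0 \<le> v" and uv: "u + v = 1"
    have a: "0 \<le> u * x$i + v * y$i" using x y u v by simp
    have "u * x$i + v * y$i \<le> u * Pmax$i + v * Pmax$i"
      using x y u v by (meson add_mono mult_left_mono)
    hence b: "u * x$i + v * y$i \<le> Pmax$i" using uv by (metis distrib_right mult_1)
    have c: "0 \<le> gg h \<eta> \<theta> (u *\<^sub>R x + v *\<^sub>R y) i"
      unfolding lin[OF uv] using x y u v by simp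
    show "0 \<le> (u *\<^sub>R x + v *\<^sub>R y) $ i \<and> (u *\<^sub>R x + v *\<^sub>R y) $ i \<le> Pmax $ i \<and> 0 \<le> gg h \<eta> \<theta> (u *\<^sub>R x + v *\<^sub>R y) i"
      using a b c by simp
  qed
  have cl: "closed (SE_set h \<eta> Pmax \<theta>)"
    unfolding eq gg_def
    by (intro closed_Collect_all closed_Collect_conj closed_Collect_le continuous_intros)
  have bd: "bounded (SE_set h \<eta> Pmax \<theta>)"
  proof -
    have "SE_set h \<eta> Pmax \<theta> \<subseteq> cbox 0 Pmax"
      unfolding eq by (auto simp: mem_box_cart)
    thus ?thesis using bounded_cbox bounded_subset by blast
  qed
  show ?thesis using cv cl bd by blast
qed

end
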